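(* Fix a total number $N_{\text{total}} > 0$ of collected data samples, split into $N_{\text{total}}/E_L$ episodes each of fixed length $E_L \in \{1,2,\dots\}$. Let $P_s(l)$ be the probability that the state at interaction step $l$ of an episode is secure (independent of $E_L$), let $N_s(E_L) = \frac{N_{\text{total}}}{E_L}\sum_{l=1}^{E_L} P_s(l)$ be the expected number of secure state visits over all episodes, $N_d(E_L) = N_{\text{total}} - N_s(E_L)$ the expected number of dead-end state visits, and $P_d(E_L) = N_d(E_L)/N_{\text{total}}$ the probability of visiting dead-end states. Then reducing $E_L$ causes $P_d$ to decrease or remain unchanged: $P_d(E_L) \le P_d(E_L+1)$ for every $E_L \ge 1$.
   Context: A dead-end state is a state from which, once reached at some step of a trajectory, no policy can lead to the goal state at any later step; a secure state is a state that is not a dead-end state. The dead-end set is absorbing along trajectories, so that $P_s(l) = \prod_{k=1}^{l}(1-P_d(k))$ with per-step dead-end probabilities $P_d(k)\in[0,1]$; in particular $P_s$ is non-increasing in $l$. *)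

theory Defs
  imports Complex_Main
begin

text \<open>Per-step dead-end probabilities pd k (k = 1,2,...); probability of being secure at step l.\<close>
definition secure_prob :: "(nat \<Rightarrow> real) \<Rightarrow> nat \<Rightarrow> real" where
  "secure_prob pd l = (\<Prod>k = 1..l. 1 - pd k)"

definition N_s :: "real \<Rightarrow> (nat \<Rightarrow> real) \<Rightarrow> nat \<Rightarrow> real" where
  "N_s Ntot Ps EL = Ntot / real EL * (\<Sum>l = 1..EL. Ps l)"

definition N_d :: "real \<Rightarrow> (nat \<Rightarrow> real) \<Rightarrow> nat \<Rightarrow> real" where
  "N_d Ntot Ps EL = Ntot - N_s Ntot Ps EL"

definition P_visit_dead :: "real \<Rightarrow> (nat \<Rightarrow> real) \<Rightarrow> nat \<Rightarrow> real" where
  "P_visit_dead Ntot Ps EL = N_d Ntot Ps EL / Ntot"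

end

theory Submission
  imports Defs
begin

lemma sp_Suc: "secure_prob pd (Suc m) = secure_prob pd m * (1 - pd (Suc m))"
  unfolding secure_prob_def by (simp add: prod.nat_ivl_Suc' mult.commute)

lemma sp_nonneg:
  assumes "\<And>k. k \<ge> 1 \<Longrightarrow> 0 \<le> pd k \<and> pd k \<le> 1"
  shows "0 \<le> secure_prob pd m"
  unfolding secure_prob_def using assms by (intro prod_nonneg) auto

lemma sp_step:
  assumes "\<And>k. k \<ge> 1 \<Longrightarrow> 0 \<le> pd k \<and> pd k \<le> 1"
  shows "secure_prob pd (Suc m) \<le> secure_prob pd m"
proof -
  have "0 \<le> secure_prob pd m" by (rule sp_nonneg[OF assms])
  moreover have "0 \<le> pd (Suc m)" "pd (Suc m) \<le> 1" using assms[of "Suc m"] by auto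
  ultimately show ?thesis unfolding sp_Suc by (simp add: mult_left_le)
qed

lemma sp_mono:
  assumes "\<And>k. k \<ge> 1 \<Longrightarrow> 0 \<le> pd k \<and> pd k \<le> 1"
  shows "l \<le> m \<Longrightarrow> secure_prob pd m \<le> secure_prob pd l"
proof (induction m)
  case 0 then show ?case by simp
next
  case (Suc m)
  show ?case
  proof (cases "l = Suc m")
    case False
    then have "l \<le> m" using Suc.prems by simp
    have "secure_prob pd (Suc m) \<le> secure_prob pd m" by (rule sp_step[OF assms])
    then show ?thesis using Suc.IH \<open>l \<le> m\<close> by linarith
  qed simp
qed

theorem corollary1:
  fixes Ntot :: real and pd :: "nat \<Rightarrow> real" and EL :: nat
  assumes "Ntot > 0"
    and "\<And>k. k \<ge> 1 \<Longrightarrow> 0 \<le> pd k \<and> pd k \<le> 1"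
    and "EL \<ge> 1"
  shows "P_visit_dead Ntot (secure_prob pd) EL \<le> P_visit_dead Ntot (secure_prob pd) (EL + 1)"
proof -
  define S where "S = (\<Sum>l = 1..EL. secure_prob pd l)"
  define a where "a = secure_prob pd (EL + 1)"
  have "(\<Sum>l = 1..EL. a) \<le> S" unfolding S_def a_def
    by (intro sum_mono sp_mono[OF assms(2)]) auto
  then have key: "real EL * a \<le> S" by simp
  have S1: "(\<Sum>l = 1..EL+1. secure_prob pd l) = S + a"
    unfolding S_def a_def by simp
  have n: "real EL > 0" using assms(3) by simp
  have le: "(S + a) / (real EL + 1) \<le> S / real EL"
    using key n by (simp add: field_simps)
  then have "Ntot / (real EL + 1) * (S + a) \<le> Ntot / real EL * S"
    using mult_left_mono[OF le, of Ntot] assms(1) by (simp add: mult.commute)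
  then show ?thesis
    unfolding P_visit_dead_def N_d_def N_s_def S1 S_def[symmetric] using assms(1)
    by (intro divide_right_mono) (auto simp: add.commute S_def[symmetric])
qed

end
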